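(* Let $q$ be a power of $2$ and let $\mathscr{C}$ be an $\mathbb{F}_q$-linear additive conjucyclic code of length $n$ over $\mathbb{F}_{q^2}$. Then its alternating dual $\mathscr{C}^{\perp_a}$ is also an $\mathbb{F}_q$-linear additive conjucyclic code.
   Context: An $\mathbb{F}_q$-linear additive code of length $n$ over $\mathbb{F}_{q^2}$ is an $\mathbb{F}_q$-subspace of $\mathbb{F}_{q^2}^n$; it is conjucyclic if closed under $T(c_0,\ldots,c_{n-1})=(c_{n-1}^q,c_0,\ldots,c_{n-2})$. Fix a primitive element $\beta$ of $\mathbb{F}_{q^2}$; the alternating inner product is $\langle u,v\rangle_a=(\beta^{2q}-\beta^2)\sum_{i=0}^{n-1}(u_iv_i^q-u_i^qv_i)$ and $\mathscr{C}^{\perp_a}=\{v\in\mathbb{F}_{q^2}^n:\langle u,v\rangle_a=0\ \forall u\in\mathscr{C}\}$. *)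

theory Defs
  imports Main
begin

text \<open>Ambient field: a finite field type 'a with CARD('a) = q^2 (this is F_{q^2}).
  F_q is the subfield {x. x^q = x}. Vectors of length n are lists of length n.\<close>

definition subfield_Fq :: "nat \<Rightarrow> 'a::field set" where
  "subfield_Fq q = {x. x ^ q = x}"

definition primitive_element :: "'a::field \<Rightarrow> bool" where
  "primitive_element \<beta> \<longleftrightarrow> (\<forall>x. x \<noteq> 0 \<longrightarrow> (\<exists>k::nat. x = \<beta> ^ k))"

definition Fq_linear_additive_code :: "nat \<Rightarrow> nat \<Rightarrow> 'a::field list set \<Rightarrow> bool" where
  "Fq_linear_additive_code q n C \<longleftrightarrow>
     C \<subseteq> {v. length v = n} \<and>
     replicate n 0 \<in> C \<and>
     (\<forall>u\<in>C. \<forall>v\<in>C. map2 (+) u v \<in> C) \<and>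
     (\<forall>a\<in>subfield_Fq q. \<forall>u\<in>C. map (\<lambda>x. a * x) u \<in> C)"

definition conj_shift :: "nat \<Rightarrow> 'a::field list \<Rightarrow> 'a list" where
  "conj_shift q c = (if c = [] then [] else (last c) ^ q # butlast c)"

definition conjucyclic :: "nat \<Rightarrow> 'a::field list set \<Rightarrow> bool" where
  "conjucyclic q C \<longleftrightarrow> (\<forall>c\<in>C. conj_shift q c \<in> C)"

definition alt_ip :: "nat \<Rightarrow> 'a::field \<Rightarrow> 'a list \<Rightarrow> 'a list \<Rightarrow> 'a" where
  "alt_ip q \<beta> u v =
     (\<beta> ^ (2 * q) - \<beta> ^ 2) * (\<Sum>i<length u. u ! i * (v ! i) ^ q - (u ! i) ^ q * v ! i)"

definition alt_dual :: "nat \<Rightarrow> 'a::field \<Rightarrow> nat \<Rightarrow> 'a list set \<Rightarrow> 'a list set" where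
  "alt_dual q \<beta> n C = {v. length v = n \<and> (\<forall>u\<in>C. alt_ip q \<beta> u v = 0)}"

end

theory Submission
  imports Defs
begin

lemma fin_fermat:
  fixes x :: "'a::{field,finite}"
  shows "x ^ card (UNIV::'a set) = x"
proof (cases "x = 0")
  case True
  then show ?thesis by (simp add: finite_UNIV_card_ge_0)
next
  case False
  let ?A = "UNIV - {0::'a}"
  have fin: "finite ?A" by simp
  have "(\<Prod>y\<in>?A. y) = (\<Prod>y\<in>?A. x * y)"
    by (rule prod.reindex_bij_witness[where j="\<lambda>y. y / x" and i="\<lambda>y. x * y"])
       (use False in auto)
  also have "\<dots> = x ^ card ?A * (\<Prod>y\<in>?A. y)"
    by (simp add: prod.distrib)
  finally have "x ^ card ?A = 1"
    using fin by (simp add: prod_zero_iff)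
  moreover have "card ?A = card (UNIV::'a set) - 1" by (simp add: card_Diff_subset)
  moreover have "card (UNIV::'a set) > 0" by (simp add: finite_UNIV_card_ge_0)
  ultimately show ?thesis
    by (metis One_nat_def Suc_pred mult.right_neutral power_Suc)
qed

lemma card_char:
  "of_nat (card (UNIV::'a set)) = (0::'a::{field,finite})"
proof -
  have "(\<Sum>y\<in>(UNIV::'a set). y) = (\<Sum>y\<in>UNIV. y + 1)"
    by (rule sum.reindex_bij_witness[where j="\<lambda>y. y - 1" and i="\<lambda>y. y + 1"]) auto
  also have "\<dots> = (\<Sum>y\<in>UNIV. y) + of_nat (card (UNIV::'a set))"
    by (simp add: sum.distrib)
  finally show ?thesis by simp
qed

lemma frob_add:
  fixes x y :: "'a::field"
  assumes "(2::'a) = 0"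
  shows "(x + y) ^ (2 ^ m) = x ^ (2 ^ m) + y ^ (2 ^ m)"
proof (induction m)
  case 0
  then show ?case by simp
next
  case (Suc m)
  have "(x + y) ^ (2 ^ Suc m) = ((x + y) ^ (2 ^ m)) ^ 2"
    by (simp add: power_mult[symmetric] mult.commute)
  also have "\<dots> = (x ^ (2 ^ m) + y ^ (2 ^ m)) ^ 2" using Suc by simp
  also have "\<dots> = (x ^ (2 ^ m)) ^ 2 + (y ^ (2 ^ m)) ^ 2 + 2 * (x ^ (2 ^ m)) * (y ^ (2 ^ m))"
    by (simp add: power2_eq_square algebra_simps)
  also have "\<dots> = (x ^ (2 ^ m)) ^ 2 + (y ^ (2 ^ m)) ^ 2" using assms by simp
  also have "\<dots> = x ^ (2 ^ Suc m) + y ^ (2 ^ Suc m)"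
    by (simp add: power_mult[symmetric] mult.commute)
  finally show ?case .
qed

lemma char2_minus:
  fixes y :: "'a::field"
  assumes "(2::'a) = 0"
  shows "- y = y"
proof -
  have "y + y = 2 * y" by simp
  then have "y + y = 0" using assms by simp
  then show ?thesis by (simp add: add_eq_0_iff)
qed

theorem corollary4p7:
  fixes C :: "'a::{field,finite} list set" and q m n :: nat and \<beta> :: 'a
  assumes "q = 2 ^ m"
    and "card (UNIV :: 'a set) = q ^ 2"
    and "primitive_element \<beta>"
    and "Fq_linear_additive_code q n C"
    and "conjucyclic q C"
  shows "Fq_linear_additive_code q n (alt_dual q \<beta> n C) \<and> conjucyclic q (alt_dual q \<beta> n C)"
proof -
  have c2: "card {0::'a, 1} \<le> card (UNIV::'a set)" by (rule card_mono) auto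
  have m1: "m \<noteq> 0"
  proof
    assume "m = 0"
    then have "card (UNIV::'a set) = 1" using assms(1,2) by simp
    with c2 show False by simp
  qed
  have qpos: "q > 0" using assms(1) by simp
  have two: "(2::'a) = 0"
  proof -
    have "(of_nat (q ^ 2) :: 'a) = 0" using card_char[where 'a='a] assms(2) by simp
    then have "(2::'a) ^ (2 * m) = 0" using assms(1) by (simp add: power_mult mult.commute)
    then show ?thesis by simp
  qed
  have neg: "\<And>y::'a. - y = y" using char2_minus[OF two] .
  have fadd: "\<And>x y::'a. (x + y) ^ q = x ^ q + y ^ q" using frob_add[OF two] assms(1) by simp
  have fq2: "\<And>x::'a. (x ^ q) ^ q = x"
  proof -
    fix x :: 'a
    have "(x ^ q) ^ q = x ^ card (UNIV::'a set)" using assms(2) by (simp add: power_mult[symmetric] power2_eq_square)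
    then show "(x ^ q) ^ q = x" using fin_fermat by simp
  qed
  have finj: "\<And>x y::'a. x ^ q = y ^ q \<Longrightarrow> x = y" by (metis fq2)
  define S where "S = (\<lambda>u v::'a list. \<Sum>i<length u. u ! i * (v ! i) ^ q - (u ! i) ^ q * v ! i)"
  define c where "c = \<beta> ^ (2 * q) - \<beta> ^ 2"
  have aip: "\<And>u v. alt_ip q \<beta> u v = c * S u v" unfolding alt_ip_def S_def c_def by simp
  have Clen: "\<And>u. u \<in> C \<Longrightarrow> length u = n" using assms(4) unfolding Fq_linear_additive_code_def by auto
  let ?D = "alt_dual q \<beta> n C"
  have Dmem: "\<And>v. v \<in> ?D \<longleftrightarrow> length v = n \<and> (\<forall>u\<in>C. c * S u v = 0)"
    unfolding alt_dual_def aip by simp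
  have Sadd: "S u (map2 (+) v w) = S u v + S u w"
    if "length u = n" "length v = n" "length w = n" for u v w
  proof -
    have "S u (map2 (+) v w) = (\<Sum>i<n. (u ! i * (v ! i) ^ q - (u ! i) ^ q * v ! i) + (u ! i * (w ! i) ^ q - (u ! i) ^ q * w ! i))"
      unfolding S_def using that by (intro sum.cong) (auto simp: fadd algebra_simps)
    also have "\<dots> = S u v + S u w" unfolding S_def using that by (simp add: sum.distrib)
    finally show ?thesis .
  qed
  have Sscal: "S u (map (\<lambda>x. a * x) v) = a * S u v"
    if "length u = n" "length v = n" "a ^ q = a" for u v a
  proof -
    have "S u (map (\<lambda>x. a * x) v) = (\<Sum>i<n. a * (u ! i * (v ! i) ^ q - (u ! i) ^ q * v ! i))"
      unfolding S_def using that by (intro sum.cong) (auto simp: power_mult_distrib algebra_simps)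
    also have "\<dots> = a * S u v" unfolding S_def using that by (simp add: sum_distrib_left)
    finally show ?thesis .
  qed
  have Szero: "S u (replicate n 0) = 0" if "length u = n" for u
    unfolding S_def using that qpos by (intro sum.neutral) auto
  have snoc: "\<exists>w' a. w = w' @ [a]" if "w \<noteq> []" for w :: "'a list"
    using that by (cases w rule: rev_cases) auto
  have Sshift: "S (conj_shift q w) (conj_shift q v) = S w v"
    if "length w = length v" for w v
  proof (cases "w = []")
    case True
    then show ?thesis using that by (simp add: conj_shift_def)
  next
    case False
    then have "v \<noteq> []" using that by auto
    with False snoc obtain w' a v' b where w: "w = w' @ [a]" and v: "v = v' @ [b]" by blast
    have l: "length w' = length v'" using that w v by simp
    let ?k = "length w'"
    have L: "S (conj_shift q w) (conj_shift q v) = (a ^ q * b - a * b ^ q) + (\<Sum>i<?k. w' ! i * (v' ! i) ^ q - (w' ! i) ^ q * v' ! i)"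
      unfolding S_def w v conj_shift_def by (simp del: sum.lessThan_Suc add: sum.lessThan_Suc_shift fq2 algebra_simps)
    have R: "S w v = (\<Sum>i<?k. w' ! i * (v' ! i) ^ q - (w' ! i) ^ q * v' ! i) + (a * b ^ q - a ^ q * b)"
    proof -
      have "S w v = (\<Sum>i<?k. (w'@[a]) ! i * ((v'@[b]) ! i) ^ q - ((w'@[a]) ! i) ^ q * (v'@[b]) ! i) + (a * b ^ q - a ^ q * b)"
        unfolding S_def w v using l by (simp add: nth_append)
      also have "(\<Sum>i<?k. (w'@[a]) ! i * ((v'@[b]) ! i) ^ q - ((w'@[a]) ! i) ^ q * (v'@[b]) ! i) = (\<Sum>i<?k. w' ! i * (v' ! i) ^ q - (w' ! i) ^ q * v' ! i)"
        using l by (intro sum.cong) (auto simp: nth_append)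
      finally show ?thesis .
    qed
    have "a ^ q * b - a * b ^ q = a * b ^ q - a ^ q * b"
      by (simp add: diff_conv_add_uminus neg add.commute)
    then show ?thesis using L R by (simp add: add.commute)
  qed
  have part1: "Fq_linear_additive_code q n ?D"
    unfolding Fq_linear_additive_code_def
  proof (intro conjI ballI)
    show "?D \<subseteq> {v. length v = n}" using Dmem by auto
    show "replicate n 0 \<in> ?D" using Dmem Szero Clen by simp
  next
    fix u v assume "u \<in> ?D" "v \<in> ?D"
    then show "map2 (+) u v \<in> ?D" using Dmem Sadd Clen by (auto simp: distrib_left)
  next
    fix a :: 'a and u assume a: "a \<in> subfield_Fq q" and "u \<in> ?D"
    then show "map (\<lambda>x. a * x) u \<in> ?D" using Dmem Sscal Clen a
      unfolding subfield_Fq_def by auto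
  qed
  have finC: "finite C"
  proof (rule finite_subset)
    show "C \<subseteq> {v. set v \<subseteq> UNIV \<and> length v = n}" using Clen by auto
    show "finite {v. set v \<subseteq> (UNIV::'a set) \<and> length v = n}" by (rule finite_lists_length_eq) simp
  qed
  have injC: "inj_on (conj_shift q) C"
  proof (rule inj_onI)
    fix x y assume x: "x \<in> C" and y: "y \<in> C" and e: "conj_shift q x = conj_shift q y"
    show "x = y"
    proof (cases "x = []")
      case True
      then show ?thesis using x y Clen by (metis length_0_conv)
    next
      case False
      then have "y \<noteq> []" using x y Clen by (metis length_0_conv)
      with False snoc obtain x' a y' b where xx: "x = x' @ [a]" and yy: "y = y' @ [b]" by blast
      from e have "a ^ q = b ^ q" "x' = y'" unfolding xx yy conj_shift_def by auto
      then show ?thesis using xx yy finj by auto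
    qed
  qed
  have imC: "conj_shift q ` C = C"
    using endo_inj_surj[OF finC _ injC] assms(5) unfolding conjucyclic_def by auto
  have part2: "conjucyclic q ?D"
    unfolding conjucyclic_def
  proof
    fix v assume v: "v \<in> ?D"
    then have lv: "length v = n" using Dmem by auto
    have "length (conj_shift q v) = n" using lv by (cases "v = []") (auto simp: conj_shift_def)
    moreover have "c * S u (conj_shift q v) = 0" if u: "u \<in> C" for u
    proof -
      from u imC obtain w where w: "w \<in> C" and uw: "u = conj_shift q w" by blast
      have "S u (conj_shift q v) = S w v" unfolding uw using Sshift Clen[OF w] lv by simp
      then show ?thesis using v w Dmem by auto
    qed
    ultimately show "conj_shift q v \<in> ?D" using Dmem by auto
  qed
  show ?thesis using part1 part2 by simp
qed

end
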